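(* Let $\alpha,\beta\in\mathbb F_q^*$. For nonempty words $\mathfrak a,\mathfrak b\in\langle\Sigma\rangle$, $\varphi_\alpha(\mathfrak a)\diamond\varphi_\beta(\mathfrak b)=\varphi_{\alpha\beta}(\mathfrak a\diamond\mathfrak b)$; and for nonempty words $\mathfrak a,\mathfrak b\in\langle\Gamma\rangle$, also $\varphi_\alpha(\mathfrak a)\diamond\varphi_\beta(\mathfrak b)=\varphi_{\alpha\beta}(\mathfrak a\diamond\mathfrak b)$.
   Context: Let $q$ be a prime power. For positive integers $r,s,j$ put $\Delta^j_{r,s}=(-1)^{r-1}\binom{j-1}{r-1}+(-1)^{s-1}\binom{j-1}{s-1}$ if $(q-1)\mid j$ and $0$ otherwise. Let $\Sigma=\{x_n\}_{n\in\mathbb N}$ and $\Gamma=\{x_{n,\varepsilon}\}_{n\in\mathbb N,\varepsilon\in\mathbb F_q^*}$ be alphabets, $\langle\Sigma\rangle,\langle\Gamma\rangle$ their sets of words (empty word $1$, juxtaposition = concatenation), and $\mathfrak C$, $\mathfrak D$ the $\mathbb F_q$-vector spaces with bases $\langle\Sigma\rangle$, $\langle\Gamma\rangle$. A word of $\langle\Sigma\rangle$ is identified with the word of $\langle\Gamma\rangle$ obtained by giving every letter character $1$ ($x_n\leftrightarrow x_{n,1}$). On $\mathfrak D$ bilinear products are defined recursively by $1\diamond\mathfrak a=\mathfrak a\diamond1=\mathfrak a$, $1\sqcup\!\sqcup\mathfrak a=\mathfrak a\sqcup\!\sqcup1=\mathfrak a$ and, for nonempty $\mathfrak a=x_{a,\alpha}\mathfrak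 a_-$, $\mathfrak b=x_{b,\beta}\mathfrak b_-$: $\mathfrak a\diamond\mathfrak b=x_{a+b,\alpha\beta}(\mathfrak a_-\sqcup\!\sqcup\mathfrak b_-)+\sum_{i+j=a+b}\Delta^j_{a,b}x_{i,\alpha\beta}(x_{j,1}\sqcup\!\sqcup(\mathfrak a_-\sqcup\!\sqcup\mathfrak b_-))$, $\mathfrak a\sqcup\!\sqcup\mathfrak b=x_{a,\alpha}(\mathfrak a_-\sqcup\!\sqcup\mathfrak b)+x_{b,\beta}(\mathfrak a\sqcup\!\sqcup\mathfrak b_-)+\mathfrak a\diamond\mathfrak b$; on $\mathfrak C$ by the same recursion without characters. For $\alpha\in\mathbb F_q^*$, the horizontal map $\varphi_\alpha:\mathfrak C\to\mathfrak D$ is linear with $\varphi_\alpha(1)=1$, $\varphi_\alpha(x_{i_1}x_{i_2}\cdots x_{i_n})=x_{i_1,\alpha}x_{i_2,1}\cdots x_{i_n,1}$; it is extended to $\varphi_\alpha:\mathfrak D\to\mathfrak D$ by $\varphi_\alpha(1)=1$ and $\varphi_\alpha(x_{u,\varepsilon}\mathfrak u_-)=x_{u,\alpha\varepsilon}\mathfrak u_-$. *)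

theory Defs
  imports Main "HOL-Library.Poly_Mapping"
begin

text \<open>The field F_q is modelled by a type 'k of class {finite, field}; q = card (UNIV :: 'k set).
  Words over Gamma: lists of letters (n, eps) :: nat * 'k; words over Sigma: lists of nat.
  The vector spaces C, D: finitely supported maps words =>0 'k.\<close>

type_synonym 'k gword = "(nat \<times> 'k) list"
type_synonym 'k dvec = "'k gword \<Rightarrow>\<^sub>0 'k"
type_synonym 'k cvec = "nat list \<Rightarrow>\<^sub>0 'k"

definition smul :: "'k::field \<Rightarrow> ('w \<Rightarrow>\<^sub>0 'k) \<Rightarrow> ('w \<Rightarrow>\<^sub>0 'k)" where
  "smul c v = Poly_Mapping.map (\<lambda>x. c * x) v"

definition linext :: "('w \<Rightarrow> ('u \<Rightarrow>\<^sub>0 'k::field)) \<Rightarrow> ('w \<Rightarrow>\<^sub>0 'k) \<Rightarrow> ('u \<Rightarrow>\<^sub>0 'k)" where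
  "linext f v = (\<Sum>w\<in>Poly_Mapping.keys v. smul (Poly_Mapping.lookup v w) (f w))"

definition bw :: "'w \<Rightarrow> ('w \<Rightarrow>\<^sub>0 'k::field)" where
  "bw w = Poly_Mapping.single w 1"

definition prefix :: "'l \<Rightarrow> ('l list \<Rightarrow>\<^sub>0 'k::field) \<Rightarrow> ('l list \<Rightarrow>\<^sub>0 'k)" where
  "prefix x v = linext (\<lambda>w. bw (x # w)) v"

definition Delta :: "nat \<Rightarrow> nat \<Rightarrow> nat \<Rightarrow> nat \<Rightarrow> int" where
  "Delta q r s j = (if (q - 1) dvd j
     then (-1) ^ (r - 1) * int ((j - 1) choose (r - 1)) + (-1) ^ (s - 1) * int ((j - 1) choose (s - 1))
     else 0)"

definition dsumD :: "nat \<Rightarrow> nat \<Rightarrow> 'k::{finite,field} \<Rightarrow> (nat \<Rightarrow> 'k dvec) \<Rightarrow> 'k dvec" where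
  "dsumD a b g F = (\<Sum>j\<in>{1..<a+b}.
      smul (of_int (Delta (card (UNIV :: 'k set)) a b j)) (prefix (a + b - j, g) (F j)))"

definition dsumC :: "nat \<Rightarrow> nat \<Rightarrow> (nat \<Rightarrow> 'k::{finite,field} cvec) \<Rightarrow> 'k cvec" where
  "dsumC a b F = (\<Sum>j\<in>{1..<a+b}.
      smul (of_int (Delta (card (UNIV :: 'k set)) a b j)) (prefix (a + b - j) (F j)))"

text \<open>lsD j w = x_{j,1} shuffle w (the shuffle with a one-letter word of character 1),
  obtained by unfolding the defining recursion for a one-letter first argument.\<close>
fun lsD :: "nat \<Rightarrow> 'k::{finite,field} gword \<Rightarrow> 'k dvec" where
  "lsD j [] = bw [(j, 1)]"
| "lsD j ((b, \<beta>) # w) =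
     bw ((j, 1) # (b, \<beta>) # w) + prefix (b, \<beta>) (lsD j w)
     + (bw ((j + b, \<beta>) # w) + dsumD j b \<beta> (\<lambda>k. lsD k w))"

fun lsC :: "nat \<Rightarrow> nat list \<Rightarrow> 'k::{finite,field} cvec" where
  "lsC j [] = bw [j]"
| "lsC j (b # w) =
     bw (j # b # w) + prefix b (lsC j w)
     + (bw ((j + b) # w) + dsumC j b (\<lambda>k. lsC k w))"

function (sequential) diaD :: "'k::{finite,field} gword \<Rightarrow> 'k gword \<Rightarrow> 'k dvec"
  and shD :: "'k::{finite,field} gword \<Rightarrow> 'k gword \<Rightarrow> 'k dvec" where
  "diaD [] v = bw v"
| "diaD u [] = bw u"
| "diaD ((a, \<alpha>) # u) ((b, \<beta>) # v) =
     (let s = shD u v in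
      prefix (a + b, \<alpha> * \<beta>) s + dsumD a b (\<alpha> * \<beta>) (\<lambda>j. linext (lsD j) s))"
| "shD [] v = bw v"
| "shD u [] = bw u"
| "shD ((a, \<alpha>) # u) ((b, \<beta>) # v) =
     prefix (a, \<alpha>) (shD u ((b, \<beta>) # v)) + prefix (b, \<beta>) (shD ((a, \<alpha>) # u) v)
     + diaD ((a, \<alpha>) # u) ((b, \<beta>) # v)"
  by pat_completeness auto
termination
  by (relation "measure (\<lambda>x. case x of Inl (u, v) \<Rightarrow> 2 * (length u + length v)
                                   | Inr (u, v) \<Rightarrow> 2 * (length u + length v) + 1)") auto

function (sequential) diaC :: "nat list \<Rightarrow> nat list \<Rightarrow> 'k::{finite,field} cvec"
  and shC :: "nat list \<Rightarrow> nat list \<Rightarrow> 'k::{finite,field} cvec" where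
  "diaC [] v = bw v"
| "diaC u [] = bw u"
| "diaC (a # u) (b # v) =
     (let s = shC u v in
      prefix (a + b) s + dsumC a b (\<lambda>j. linext (lsC j) s))"
| "shC [] v = bw v"
| "shC u [] = bw u"
| "shC (a # u) (b # v) =
     prefix a (shC u (b # v)) + prefix b (shC (a # u) v) + diaC (a # u) (b # v)"
  by pat_completeness auto
termination
  by (relation "measure (\<lambda>x. case x of Inl (u, v) \<Rightarrow> 2 * (length u + length v)
                                   | Inr (u, v) \<Rightarrow> 2 * (length u + length v) + 1)") auto

fun phiC :: "'k::field \<Rightarrow> nat list \<Rightarrow> 'k gword" where
  "phiC \<alpha> [] = []"
| "phiC \<alpha> (i # w) = (i, \<alpha>) # map (\<lambda>n. (n, 1)) w"

fun phiD :: "'k::field \<Rightarrow> 'k gword \<Rightarrow> 'k gword" where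
  "phiD \<alpha> [] = []"
| "phiD \<alpha> ((u, \<epsilon>) # w) = (u, \<alpha> * \<epsilon>) # w"

definition phiDv :: "'k::field \<Rightarrow> 'k dvec \<Rightarrow> 'k dvec" where
  "phiDv \<alpha> v = linext (\<lambda>w. bw (phiD \<alpha> w)) v"

definition phiCv :: "'k::field \<Rightarrow> 'k cvec \<Rightarrow> 'k dvec" where
  "phiCv \<alpha> v = linext (\<lambda>w. bw (phiC \<alpha> w)) v"

end

theory Submission imports Defs begin

lemma lookup_smul[simp]: "Poly_Mapping.lookup (smul c v) w = c * Poly_Mapping.lookup v w"
  unfolding smul_def by (simp add: Poly_Mapping.map.rep_eq when_def)

lemma keys_smul: "Poly_Mapping.keys (smul c v) \<subseteq> Poly_Mapping.keys v"
  by (auto simp: in_keys_iff)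

lemma smul_add: "smul c (v + w) = smul c v + smul c w"
  by (rule poly_mapping_eqI) (simp add: lookup_add algebra_simps)
lemma smul_add_left: "smul (c + d) v = smul c v + smul d v"
  by (rule poly_mapping_eqI) (simp add: lookup_add algebra_simps)
lemma smul_zero_left[simp]: "smul 0 v = 0"
  by (rule poly_mapping_eqI) simp
lemma smul_zero[simp]: "smul c 0 = 0"
  by (rule poly_mapping_eqI) simp
lemma smul_smul: "smul c (smul d v) = smul (c * d) v"
  by (rule poly_mapping_eqI) (simp add: algebra_simps)
lemma smul_sum: "smul c (sum f S) = (\<Sum>x\<in>S. smul c (f x))"
  by (induction S rule: infinite_finite_induct) (auto simp: smul_add)

lemma linext_superset:
  assumes "finite S" "Poly_Mapping.keys v \<subseteq> S"
  shows "linext f v = (\<Sum>w\<in>S. smul (Poly_Mapping.lookup v w) (f w))"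
  unfolding linext_def
  by (rule sum.mono_neutral_left) (use assms in \<open>auto simp: in_keys_iff\<close>)

lemma linext_add: "linext f (v + w) = linext f v + linext f w"
proof -
  let ?S = "Poly_Mapping.keys v \<union> Poly_Mapping.keys w"
  have "linext f (v + w) = (\<Sum>x\<in>?S. smul (Poly_Mapping.lookup (v+w) x) (f x))"
    by (rule linext_superset) (use keys_add[of v w] in auto)
  also have "\<dots> = (\<Sum>x\<in>?S. smul (Poly_Mapping.lookup v x) (f x)) + (\<Sum>x\<in>?S. smul (Poly_Mapping.lookup w x) (f x))"
    by (simp add: lookup_add smul_add_left sum.distrib)
  also have "\<dots> = linext f v + linext f w"
    by (subst (1 2) linext_superset[symmetric]) auto
  finally show ?thesis .
qed

lemma linext_zero[simp]: "linext f 0 = 0"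
  by (simp add: linext_def)

lemma linext_smul: "linext f (smul c v) = smul c (linext f v)"
proof -
  have "linext f (smul c v) = (\<Sum>x\<in>Poly_Mapping.keys v. smul (Poly_Mapping.lookup (smul c v) x) (f x))"
    by (rule linext_superset) (auto simp: keys_smul)
  also have "\<dots> = smul c (linext f v)"
    by (simp add: linext_def smul_sum smul_smul)
  finally show ?thesis .
qed

lemma linext_sum: "linext f (sum g S) = (\<Sum>x\<in>S. linext f (g x))"
  by (induction S rule: infinite_finite_induct) (auto simp: linext_add)

lemma smul_one[simp]: "smul 1 v = v"
  by (rule poly_mapping_eqI) simp

lemma linext_bw[simp]: "linext f (bw w) = f w"
  by (simp add: linext_def bw_def)

lemma linext_comp: "linext f (linext g v) = linext (\<lambda>w. linext f (g w)) v"
  by (simp only: linext_def[of g v] linext_def[of "(\<lambda>w. linext f (g w))" v] linext_sum linext_smul)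

lemma phiDv_prefix: "phiDv c (prefix (n,g) w) = prefix (n, c*g) w"
  by (simp add: phiDv_def prefix_def linext_comp)

lemma phiDv_add: "phiDv c (v + w) = phiDv c v + phiDv c w"
  by (simp add: phiDv_def linext_add)

lemma phiDv_dsumD: "phiDv c (dsumD a b g F) = dsumD a b (c*g) F"
  by (simp add: dsumD_def phiDv_def linext_sum linext_smul prefix_def linext_comp)

lemma diaD_phi:
  assumes "g' * h' = c * (g * h)"
  shows "phiDv c (diaD ((a,g)#u) ((b,h)#v)) = diaD ((a,g')#u) ((b,h')#v)"
  using assms by (simp add: Let_def phiDv_add phiDv_prefix phiDv_dsumD)

definition emb :: "'k::{finite,field} cvec \<Rightarrow> 'k dvec" where
  "emb v = linext (\<lambda>w. bw (map (\<lambda>n. (n, 1)) w)) v"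

lemma linext_emb: "linext (\<lambda>w. bw (map (\<lambda>n. (n, 1)) w)) v = emb v"
  by (simp add: emb_def)

lemma emb_prefix: "emb (prefix n w) = prefix (n,1) (emb w)"
  by (simp add: emb_def prefix_def linext_comp)

lemma emb_add: "emb (v + w) = emb v + emb w"
  by (simp add: emb_def linext_add)

lemma emb_bw[simp]: "emb (bw w) = bw (map (\<lambda>n. (n, 1)) w)"
  by (simp add: emb_def)

lemma emb_dsumC: "emb (dsumC a b F) = dsumD a b 1 (\<lambda>j. emb (F j))"
  by (simp add: dsumC_def dsumD_def emb_def linext_sum linext_smul emb_prefix[unfolded emb_def])

lemma lsD_emb: "lsD j (map (\<lambda>n. (n, 1)) w) = emb (lsC j w)"
proof (induction w arbitrary: j)
  case Nil
  then show ?case by simp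
next
  case (Cons b w)
  then show ?case by (simp add: emb_add emb_prefix emb_dsumC)
qed

lemma linext_lsD_emb: "linext (lsD j) (emb w) = emb (linext (lsC j) w)"
proof -
  have "linext (lsD j) (emb w) = linext (\<lambda>x. emb (lsC j x)) w"
    unfolding emb_def[of w] linext_comp by (simp add: lsD_emb)
  also have "\<dots> = emb (linext (lsC j) w)"
    unfolding emb_def linext_comp ..
  finally show ?thesis .
qed

lemma dia_sh_emb:
  "diaD (map (\<lambda>n. (n, 1)) u) (map (\<lambda>n. (n, 1)) v) = (emb (diaC u v) :: 'k::{finite,field} dvec)"
  "shD (map (\<lambda>n. (n, 1)) u) (map (\<lambda>n. (n, 1)) v) = (emb (shC u v) :: 'k::{finite,field} dvec)"
proof (induction u v rule: diaC_shC.induct)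
  case (3 a u b v)
  then show ?case by (simp add: Let_def emb_add emb_prefix emb_dsumC linext_lsD_emb)
next
  case (6 a u b v)
  then show ?case by (simp add: emb_add emb_prefix)
qed simp_all

lemma phiC_eq: "phiC c w = phiD c (map (\<lambda>n. (n, 1)) w)"
  by (cases w) simp_all

lemma phiCv_emb: "phiCv c v = phiDv c (emb v)"
  by (simp add: phiCv_def phiDv_def emb_def linext_comp phiC_eq)

theorem lemma5p4:
  fixes \<alpha> \<beta> :: "'k::{finite,field}"
  assumes "\<alpha> \<noteq> 0" and "\<beta> \<noteq> 0"
  shows "(\<forall>a b :: nat list. a \<noteq> [] \<longrightarrow> b \<noteq> [] \<longrightarrow> (\<forall>n\<in>set a. n > 0) \<longrightarrow> (\<forall>n\<in>set b. n > 0) \<longrightarrow>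
            diaD (phiC \<alpha> a) (phiC \<beta> b) = phiCv (\<alpha> * \<beta>) (diaC a b))
       \<and> (\<forall>a b :: 'k gword. a \<noteq> [] \<longrightarrow> b \<noteq> [] \<longrightarrow>
            (\<forall>(n, e)\<in>set a. n > 0 \<and> e \<noteq> 0) \<longrightarrow> (\<forall>(n, e)\<in>set b. n > 0 \<and> e \<noteq> 0) \<longrightarrow>
            diaD (phiD \<alpha> a) (phiD \<beta> b) = phiDv (\<alpha> * \<beta>) (diaD a b))"
proof (intro conjI allI impI)
  fix a b :: "nat list"
  assume "a \<noteq> []" "b \<noteq> []"
  then obtain a0 u b0 v where ab: "a = a0 # u" "b = b0 # v"
    by (meson list.exhaust)
  have "diaD (phiC \<alpha> a) (phiC \<beta> b) = diaD ((a0,\<alpha>) # map (\<lambda>n. (n, 1)) u) ((b0,\<beta>) # map (\<lambda>n. (n, 1)) v)"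
    by (simp add: ab)
  also have "\<dots> = phiDv (\<alpha> * \<beta>) (diaD ((a0,1) # map (\<lambda>n. (n, 1)) u) ((b0,1) # map (\<lambda>n. (n, 1)) v))"
    by (rule diaD_phi[symmetric]) simp
  also have "\<dots> = phiDv (\<alpha> * \<beta>) (emb (diaC a b))"
    using dia_sh_emb(1)[of "a0#u" "b0#v"] unfolding ab list.map(2) by (rule arg_cong)
  also have "\<dots> = phiCv (\<alpha> * \<beta>) (diaC a b)"
    by (simp add: phiCv_emb)
  finally show "diaD (phiC \<alpha> a) (phiC \<beta> b) = phiCv (\<alpha> * \<beta>) (diaC a b)" .
next
  fix a b :: "'k gword"
  assume "a \<noteq> []" "b \<noteq> []"
  then obtain a0 a1 u b0 b1 v where ab: "a = (a0, a1) # u" "b = (b0, b1) # v"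
    by (metis list.exhaust prod.exhaust)
  show "diaD (phiD \<alpha> a) (phiD \<beta> b) = phiDv (\<alpha> * \<beta>) (diaD a b)"
  proof -
    have "phiDv (\<alpha> * \<beta>) (diaD ((a0,a1)#u) ((b0,b1)#v)) = diaD ((a0,\<alpha>*a1)#u) ((b0,\<beta>*b1)#v)"
      by (rule diaD_phi) (simp add: mult_ac)
    then show ?thesis unfolding ab phiD.simps by (rule sym)
  qed
qed

end
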